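(* For each elementary cellular automaton $F$ with rule number in $\{23, 50, 77, 178, 232\}$, $D(\textsc{Pred}_{F,n})=O(\log n)$.
   Context: An elementary cellular automaton (ECA) with rule number $N\in\{0,\dots,255\}$ is the map $F:\{0,1\}^{\mathbb Z}\to\{0,1\}^{\mathbb Z}$ given by $F(x)_i=f(x_{i-1},x_i,x_{i+1})$. Here the local rule $f:\{0,1\}^3\to\{0,1\}$ is determined by $N=\sum_{a,b,c\in\{0,1\}}2^{4a+2b+c}f(a,b,c)$. On a finite word of length $m\ge 3$, $F$ produces the word of length $m-2$ obtained by applying $f$ at every position whose full neighbourhood lies in the word. For $n\ge1$, $\textsc{Pred}_{F,n}:\{0,1\}^{2n+1}\to\{0,1\}$ maps a word $x=x_{-n}\cdots x_n$ to the single letter of $F^n(x)$, i.e. the state of the central cell after $n$ steps. For a function $g:X\times Y\to Z$, $D(g)$ is the minimal depth of a deterministic two-party protocol computing $g$. In such a protocol, Alice knows $x$ and Bob knows $y$. The protocol is a binary tree: each internal node is labelled by a function of Alice's input only or of Bob's input only, with values in $\{\text{left},\text{right}\}$, and each leaf is labelled by an output value. For $g:\{0,1\}^m\to Z$, set $D(g)=\max_{0\le i<m}D(g_i)$, where $g_i:\{0,1\}^i\times\{0,1\}^{m-i}\to Z$ is $g_i(x,y)=g(xy)$. *)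

theory Defs
  imports Main "HOL-Library.Landau_Symbols"
begin

definition eca_local :: "nat \<Rightarrow> bool \<Rightarrow> bool \<Rightarrow> bool \<Rightarrow> bool" where
  "eca_local N a b c = bit N (4 * of_bool a + 2 * of_bool b + of_bool c)"

definition eca_word :: "nat \<Rightarrow> bool list \<Rightarrow> bool list" where
  "eca_word N w = map (\<lambda>i. eca_local N (w ! i) (w ! (i+1)) (w ! (i+2))) [0..<length w - 2]"

text \<open>Pred_{F,n}: the single letter of F^n(x) for a word x of length 2n+1.\<close>
definition eca_pred :: "nat \<Rightarrow> nat \<Rightarrow> bool list \<Rightarrow> bool" where
  "eca_pred N n x = hd ((eca_word N ^^ n) x)"

text \<open>Deterministic two-party protocol trees; False = left, True = right.\<close>
datatype ('x, 'y, 'z) protocol =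
    Leaf 'z
  | ANode "'x \<Rightarrow> bool" "('x, 'y, 'z) protocol" "('x, 'y, 'z) protocol"
  | BNode "'y \<Rightarrow> bool" "('x, 'y, 'z) protocol" "('x, 'y, 'z) protocol"

fun prot_eval :: "('x, 'y, 'z) protocol \<Rightarrow> 'x \<Rightarrow> 'y \<Rightarrow> 'z" where
  "prot_eval (Leaf z) x y = z"
| "prot_eval (ANode p l r) x y = (if p x then prot_eval r x y else prot_eval l x y)"
| "prot_eval (BNode p l r) x y = (if p y then prot_eval r x y else prot_eval l x y)"

fun prot_depth :: "('x, 'y, 'z) protocol \<Rightarrow> nat" where
  "prot_depth (Leaf z) = 0"
| "prot_depth (ANode p l r) = Suc (max (prot_depth l) (prot_depth r))"
| "prot_depth (BNode p l r) = Suc (max (prot_depth l) (prot_depth r))"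

definition cc_split :: "(bool list \<Rightarrow> 'z) \<Rightarrow> nat \<Rightarrow> nat \<Rightarrow> nat" where
  "cc_split g m i = (LEAST d. \<exists>P :: (bool list, bool list, 'z) protocol.
      prot_depth P = d \<and>
      (\<forall>x y. length x = i \<longrightarrow> length y = m - i \<longrightarrow> prot_eval P x y = g (x @ y)))"

definition cc :: "(bool list \<Rightarrow> 'z) \<Rightarrow> nat \<Rightarrow> nat" where
  "cc g m = Max ((\<lambda>i. cc_split g m i) ` {0..<m})"

end

theory Submission
  imports Defs "HOL-Library.Discrete_Functions"
begin


definition maj :: "bool \<Rightarrow> bool \<Rightarrow> bool \<Rightarrow> bool" where
  "maj a b c = (a \<and> b \<or> b \<and> c \<or> a \<and> c)"

lemma loc232: "eca_local 232 a b c = maj a b c"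
  by (cases a; cases b; cases c; simp add: eca_local_def maj_def bit_0)
lemma loc23: "eca_local 23 a b c = (\<not> maj a b c)"
  by (cases a; cases b; cases c; simp add: eca_local_def maj_def bit_0)
lemma loc178: "eca_local 178 a b c = maj a (\<not>b) c"
  by (cases a; cases b; cases c; simp add: eca_local_def maj_def bit_0)
lemma loc77: "eca_local 77 a b c = (\<not> maj a (\<not>b) c)"
  by (cases a; cases b; cases c; simp add: eca_local_def maj_def bit_0)
lemma loc50: "eca_local 50 a b c = (\<not>b \<and> (a \<or> c))"
  by (cases a; cases b; cases c; simp add: eca_local_def maj_def bit_0)


lemma len_word[simp]: "length (eca_word N w) = length w - 2"
  by (simp add: eca_word_def)

lemma nth_word: "i < length w - 2 \<Longrightarrow> eca_word N w ! i = eca_local N (w!i) (w!(i+1)) (w!(i+2))"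
  by (simp add: eca_word_def)

lemma len_pow[simp]: "length ((eca_word N ^^ t) w) = length w - 2*t"
  by (induction t) auto

lemma word_split0: "eca_word N (x0@a#b#y) = eca_word N (x0@[a,b]) @ eca_word N (a#b#y)"
proof (rule nth_equalityI)
  show "length (eca_word N (x0@a#b#y)) = length (eca_word N (x0@[a,b]) @ eca_word N (a#b#y))"
    by simp
  fix i assume i: "i < length (eca_word N (x0@a#b#y))"
  show "eca_word N (x0@a#b#y) ! i = (eca_word N (x0@[a,b]) @ eca_word N (a#b#y)) ! i"
  proof (cases "i < length x0")
    case True then show ?thesis using i by (auto simp: nth_word nth_append nth_Cons split: nat.splits)
  next
    case False
    then obtain j where j: "i = length x0 + j" by (metis le_add_diff_inverse not_less)
    have e: "length x0 + j + 1 = length x0 + (j+1)" "length x0 + j + 2 = length x0 + (j+2)" by auto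
    show ?thesis using i unfolding j
      by (simp add: nth_word nth_append e del: append_Cons)
  qed
qed

lemma word_split: "2 \<le> length x \<Longrightarrow> eca_word N (x@y) = eca_word N x @ eca_word N (drop (length x - 2) x @ y)"
proof -
  assume x: "2 \<le> length x"
  obtain x0 z where xz: "x = x0 @ z" "length z = 2" using x
    by (metis append_take_drop_id diff_diff_cancel length_drop)
  then obtain a b where "z = [a,b]"
    by (metis (no_types, opaque_lifting) One_nat_def Suc_length_conv length_0_conv numeral_2_eq_2)
  then show ?thesis using word_split0[of N x0 a b y] xz by simp
qed

fun phi :: "nat \<Rightarrow> bool list \<Rightarrow> bool list" where
  "phi p [] = []"
| "phi p (a#w) = (a \<noteq> odd p) # phi (Suc p) w"

lemma len_phi[simp]: "length (phi p w) = length w"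
  by (induction w arbitrary: p) auto

lemma nth_phi: "i < length w \<Longrightarrow> phi p w ! i = (w!i \<noteq> odd (p+i))"
  by (induction w arbitrary: p i) (auto simp: nth_Cons split: nat.splits)

lemma phi_append: "phi p (a@b) = phi p a @ phi (p + length a) b"
  by (induction a arbitrary: p) auto

lemma phi_phi[simp]: "phi p (phi p w) = w"
  by (induction w arbitrary: p) auto

lemma conj178: "eca_word 178 (phi p z) = phi p (eca_word 232 z)"
  apply (rule nth_equalityI)
   apply simp
  apply (simp add: nth_word nth_phi loc178 loc232 maj_def)
  apply auto
  done

lemma conj77: "eca_word 77 (phi p z) = phi (Suc p) (eca_word 232 z)"
  apply (rule nth_equalityI)
   apply simp
  apply (simp add: nth_word nth_phi loc77 loc232 maj_def)
  apply auto
  done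

lemma conj23: "eca_word 23 z = map Not (eca_word 232 z)"
  apply (rule nth_equalityI)
   apply simp
  apply (simp add: nth_word loc23 loc232)
  done

lemma neg232: "eca_word 232 (map Not z) = map Not (eca_word 232 z)"
  apply (rule nth_equalityI)
   apply simp
  apply (simp add: nth_word loc232 maj_def)
  apply auto
  done

definition no111 :: "bool list \<Rightarrow> bool" where
  "no111 w = (\<forall>i. i + 2 < length w \<longrightarrow> \<not> (w!i \<and> w!(i+1) \<and> w!(i+2)))"

lemma no111_50: "no111 (eca_word 50 w)"
  unfolding no111_def
  apply (auto simp: nth_word loc50)
  done

lemma agree50: "no111 w \<Longrightarrow> eca_word 50 w = eca_word 178 w"
  apply (rule nth_equalityI)
   apply simp
  apply (simp add: nth_word loc50 loc178 maj_def no111_def)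
  apply (metis add_2_eq_Suc' less_diff_conv)
  done

lemma pow178: "(eca_word 178 ^^ n) (phi p z) = phi p ((eca_word 232 ^^ n) z)"
  by (induction n) (auto simp: conj178)

lemma pow77: "(eca_word 77 ^^ n) (phi p z) = phi (p+n) ((eca_word 232 ^^ n) z)"
  by (induction n) (auto simp: conj77)

lemma pow23: "(eca_word 23 ^^ n) z = (if odd n then map Not else id) ((eca_word 232 ^^ n) z)"
  by (induction n) (auto simp: conj23 neg232 comp_def)

lemma pow50: "(eca_word 50 ^^ Suc n) w = (eca_word 178 ^^ n) (eca_word 50 w)"
proof (induction n)
  case 0 then show ?case by simp
next
  case (Suc n)
  have "(eca_word 50 ^^ Suc (Suc n)) w = eca_word 50 ((eca_word 50 ^^ Suc n) w)" by simp
  also have "\<dots> = eca_word 178 ((eca_word 50 ^^ Suc n) w)"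
    by (rule agree50) (simp add: no111_50)
  finally show ?case using Suc by simp
qed

definition Q :: "nat \<Rightarrow> bool list \<Rightarrow> bool" where
  "Q t w = (eca_word 232 ^^ t) w ! 0"

lemma pred_nth: "length w = 2*n+1 \<Longrightarrow> eca_pred N n w = (eca_word N ^^ n) w ! 0"
  unfolding eca_pred_def by (rule hd_conv_nth) (metis len_pow list.size(3) add_diff_cancel_left' zero_neq_one)

lemma pred232: "length w = 2*n+1 \<Longrightarrow> eca_pred 232 n w = Q n w"
  by (simp add: pred_nth Q_def)

lemma pred23: "length w = 2*n+1 \<Longrightarrow> eca_pred 23 n w = (Q n w \<noteq> odd n)"
  by (simp add: pred_nth Q_def pow23)

lemma pred178: "length w = 2*n+1 \<Longrightarrow> eca_pred 178 n w = Q n (phi 0 w)"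
proof -
  assume l: "length w = 2*n+1"
  have "eca_pred 178 n w = (eca_word 178 ^^ n) (phi 0 (phi 0 w)) ! 0" by (simp only: pred_nth[OF l] phi_phi)
  also have "\<dots> = phi 0 ((eca_word 232 ^^ n) (phi 0 w)) ! 0" by (simp only: pow178)
  also have "\<dots> = Q n (phi 0 w)" by (simp add: nth_phi Q_def l)
  finally show ?thesis .
qed

lemma pred77: "length w = 2*n+1 \<Longrightarrow> eca_pred 77 n w = (Q n (phi 0 w) \<noteq> odd n)"
proof -
  assume l: "length w = 2*n+1"
  have "eca_pred 77 n w = (eca_word 77 ^^ n) (phi 0 (phi 0 w)) ! 0" by (simp only: pred_nth[OF l] phi_phi)
  also have "\<dots> = phi n ((eca_word 232 ^^ n) (phi 0 w)) ! 0" by (simp only: pow77 add_0)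
  also have "\<dots> = (Q n (phi 0 w) \<noteq> odd n)" by (simp add: nth_phi Q_def l)
  finally show ?thesis .
qed

lemma pred50: "length w = 2*Suc n+1 \<Longrightarrow> eca_pred 50 (Suc n) w = Q n (phi 0 (eca_word 50 w))"
proof -
  assume l: "length w = 2*Suc n+1"
  have "eca_pred 50 (Suc n) w = (eca_word 178 ^^ n) (phi 0 (phi 0 (eca_word 50 w))) ! 0"
    by (simp only: pred_nth[OF l] pow50 phi_phi)
  also have "\<dots> = phi 0 ((eca_word 232 ^^ n) (phi 0 (eca_word 50 w))) ! 0" by (simp only: pow178)
  also have "\<dots> = Q n (phi 0 (eca_word 50 w))" by (simp add: nth_phi Q_def l)
  finally show ?thesis .
qed



lemma maj_cc1[simp]: "maj a c c = c" and maj_cc2[simp]: "maj c c a = c"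
  by (auto simp: maj_def)

lemma wall_aux:
  assumes lu: "length u = length u'"
  shows "\<forall>j. j < length (u@c#c#r) - 2*t \<longrightarrow> length u \<le> j + t \<longrightarrow>
     (eca_word 232 ^^ t) (u@c#c#r) ! j = (eca_word 232 ^^ t) (u'@c#c#r) ! j \<and>
     ((j+t = length u \<or> j+t = Suc (length u)) \<longrightarrow> (eca_word 232 ^^ t) (u@c#c#r) ! j = c)"
proof (induction t)
  case 0
  show ?case
  proof (intro allI impI)
    fix j assume j: "j < length (u@c#c#r) - 2*0" "length u \<le> j + 0"
    then obtain i where i: "j = length u + i" by (metis add.right_neutral le_add_diff_inverse)
    show "(eca_word 232 ^^ 0) (u@c#c#r) ! j = (eca_word 232 ^^ 0) (u'@c#c#r) ! j \<and>
     ((j+0 = length u \<or> j+0 = Suc (length u)) \<longrightarrow> (eca_word 232 ^^ 0) (u@c#c#r) ! j = c)"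
      unfolding i using lu by (auto simp: nth_append)
  qed
next
  case (Suc t)
  show ?case
  proof (intro allI impI)
    fix j assume j: "j < length (u@c#c#r) - 2*Suc t" "length u \<le> j + Suc t"
    let ?V = "(eca_word 232 ^^ t) (u@c#c#r)"
    let ?V' = "(eca_word 232 ^^ t) (u'@c#c#r)"
    have lV: "length ?V = length (u@c#c#r) - 2*t" "length ?V' = length (u@c#c#r) - 2*t" using lu by auto
    have jl: "j < length ?V - 2" "j < length ?V' - 2" using j lV by auto
    have e1: "(eca_word 232 ^^ Suc t) (u@c#c#r) ! j = maj (?V!j) (?V!(j+1)) (?V!(j+2))"
      using jl by (simp add: nth_word loc232)
    have e2: "(eca_word 232 ^^ Suc t) (u'@c#c#r) ! j = maj (?V'!j) (?V'!(j+1)) (?V'!(j+2))"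
      using jl by (simp add: nth_word loc232)
    have h1: "?V!(j+1) = ?V'!(j+1)" "?V!(j+2) = ?V'!(j+2)"
      using Suc[rule_format, of "j+1"] Suc[rule_format, of "j+2"] j by auto
    show "(eca_word 232 ^^ Suc t) (u@c#c#r) ! j = (eca_word 232 ^^ Suc t) (u'@c#c#r) ! j \<and>
     ((j+Suc t = length u \<or> j+Suc t = Suc (length u)) \<longrightarrow> (eca_word 232 ^^ Suc t) (u@c#c#r) ! j = c)"
    proof (cases "length u \<le> j + t")
      case True
      have h0: "?V!j = ?V'!j" using Suc[rule_format, of j] j True by auto
      have w: "?V!j = c \<and> ?V!(j+1) = c" if jt: "j + t = length u"
      proof -
        have A: "j < length (u@c#c#r) - 2*t" "j+1 < length (u@c#c#r) - 2*t" using j by auto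
        have B: "length u \<le> j+t" "length u \<le> (j+1)+t" using jt by auto
        have "?V!j = c" using Suc[rule_format, OF A(1) B(1)] jt by blast
        moreover have "?V!(j+1) = c" using Suc[rule_format, OF A(2) B(2)] jt by auto
        ultimately show ?thesis by simp
      qed
      have "(eca_word 232 ^^ Suc t) (u@c#c#r) ! j = (eca_word 232 ^^ Suc t) (u'@c#c#r) ! j"
        unfolding e1 e2 h0 h1 ..
      moreover have "(j+Suc t = length u \<or> j+Suc t = Suc (length u)) \<longrightarrow> (eca_word 232 ^^ Suc t) (u@c#c#r) ! j = c"
      proof
        assume "j+Suc t = length u \<or> j+Suc t = Suc (length u)"
        then have "j + t = length u" using True by auto
        then show "(eca_word 232 ^^ Suc t) (u@c#c#r) ! j = c" unfolding e1 using w by simp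
      qed
      ultimately show ?thesis by blast
    next
      case False
      then have jt: "j + Suc t = length u" using j by auto
      have A: "j+1 < length (u@c#c#r) - 2*t" "j+2 < length (u@c#c#r) - 2*t" using j by auto
      have B: "length u \<le> (j+1)+t" "length u \<le> (j+2)+t" using jt by auto
      have w: "?V!(j+1) = c" "?V!(j+2) = c"
        using Suc[rule_format, OF A(1) B(1)] Suc[rule_format, OF A(2) B(2)] jt by auto
      show ?thesis unfolding e1 e2 using w h1 by auto
    qed
  qed
qed

lemma wallQ:
  assumes "length u = length u'" "length u \<le> t"
  shows "Q t (u@c#c#r) = Q t (u'@c#c#r)"
proof (cases "0 < length (u@c#c#r) - 2*t")
  case True
  then show ?thesis using wall_aux[OF assms(1), of c r t] assms(2) by (auto simp: Q_def)
next
  case False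
  then have L: "length (u@c#c#r) - 2*t = 0" "length (u'@c#c#r) - 2*t = 0" using assms(1) by auto
  have "length ((eca_word 232 ^^ t) (u@c#c#r)) = 0" "length ((eca_word 232 ^^ t) (u'@c#c#r)) = 0"
    by (simp_all only: len_pow L)
  then have "(eca_word 232 ^^ t) (u@c#c#r) = []" "(eca_word 232 ^^ t) (u'@c#c#r) = []"
    by (simp_all only: length_0_conv)
  then show ?thesis by (simp add: Q_def)
qed

definition haspair :: "bool list \<Rightarrow> bool" where
  "haspair x = (\<exists>k. Suc k < length x \<and> x!k = x!Suc k)"
definition lastpair :: "bool list \<Rightarrow> nat" where
  "lastpair x = (GREATEST k. Suc k < length x \<and> x!k = x!Suc k)"
definition sig :: "bool list \<Rightarrow> bool list" where
  "sig x = (if haspair x then drop (lastpair x) x else x)"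

lemma lastpair_prop: "haspair x \<Longrightarrow> Suc (lastpair x) < length x \<and> x!lastpair x = x!Suc (lastpair x)"
  unfolding haspair_def lastpair_def
  by (elim exE, rule GreatestI_nat[where b="length x"]) auto

lemma lastpair_max: "Suc k < length x \<Longrightarrow> x!k = x!Suc k \<Longrightarrow> k \<le> lastpair x"
  unfolding lastpair_def by (rule Greatest_le_nat[where b="length x"]) auto

lemma drop_Cons_nth: "k < length x \<Longrightarrow> drop k x = x!k # drop (Suc k) x"
  by (simp add: Cons_nth_drop_Suc)

lemma drop2: "Suc k < length x \<Longrightarrow> drop k x = x!k # x!Suc k # drop (Suc (Suc k)) x"
  by (simp add: Cons_nth_drop_Suc)

lemma sig_inv:
  assumes l: "length x = length x'" and s: "sig x = sig x'" and t: "length x \<le> t + 2"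
  shows "Q t (x@r) = Q t (x'@r)"
proof (cases "haspair x")
  case True
  note p = lastpair_prop[OF True]
  define k where "k = lastpair x"
  have hp: "haspair (sig x)" using p unfolding sig_def haspair_def k_def[symmetric]
    by (intro exI[of _ 0]) (auto simp: True k_def)
  have True': "haspair x'"
  proof (rule ccontr)
    assume "\<not> haspair x'"
    then have "sig x' = x'" by (simp add: sig_def)
    then show False using hp s \<open>\<not> haspair x'\<close> by simp
  qed
  note p' = lastpair_prop[OF True']
  have d: "drop k x = drop (lastpair x') x'" using s True True' by (simp add: sig_def k_def)
  then have "length x - k = length x' - lastpair x'" by (metis length_drop)
  then have kk: "lastpair x' = k" using p p' l k_def by auto
  have xs: "x = take k x @ x!k # x!k # drop (Suc (Suc k)) x"
  proof -
    have "x = take k x @ drop k x" by simp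
    also have "drop k x = x!k # x!k # drop (Suc (Suc k)) x" using p drop2[of k x] k_def by simp
    finally show ?thesis .
  qed
  have xs': "x' = take k x' @ x'!k # x'!k # drop (Suc (Suc k)) x'"
  proof -
    have "x' = take k x' @ drop k x'" by simp
    also have "drop k x' = x'!k # x'!k # drop (Suc (Suc k)) x'" using p' drop2[of k x'] kk by simp
    finally show ?thesis .
  qed
  have eqs: "x'!k = x!k" "drop (Suc (Suc k)) x' = drop (Suc (Suc k)) x"
  proof -
    have "drop k x = x!k # x!Suc k # drop (Suc (Suc k)) x"
      using p drop2[of k x] k_def by simp
    moreover have "drop k x' = x'!k # x'!Suc k # drop (Suc (Suc k)) x'"
      using p' drop2[of k x'] kk by simp
    ultimately show "x'!k = x!k" "drop (Suc (Suc k)) x' = drop (Suc (Suc k)) x"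
      using d kk by auto
  qed
  have "Q t (x@r) = Q t (take k x @ x!k # x!k # (drop (Suc (Suc k)) x @ r))"
    by (subst xs) simp
  also have "\<dots> = Q t (take k x' @ x!k # x!k # (drop (Suc (Suc k)) x @ r))"
    by (rule wallQ) (use p l t k_def in auto)
  also have "\<dots> = Q t (x'@r)"
    by (subst (2) xs') (simp add: eqs)
  finally show ?thesis .
next
  case False
  have hp: "\<not> haspair x'"
  proof
    assume h: "haspair x'"
    note p' = lastpair_prop[OF h]
    have "haspair (sig x')" using p' unfolding sig_def haspair_def
      by (intro exI[of _ 0]) (auto simp: h)
    then show False using s False by (simp add: sig_def)
  qed
  then show ?thesis using s False by (simp add: sig_def)
qed

fun alt :: "bool \<Rightarrow> nat \<Rightarrow> bool list" where
  "alt b 0 = []"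
| "alt b (Suc l) = b # alt (\<not>b) l"

lemma nopair_alt: "(\<forall>k. Suc k < length y \<longrightarrow> y!k \<noteq> y!Suc k) \<Longrightarrow> y = alt (hd y) (length y)"
proof (induction y)
  case Nil then show ?case by simp
next
  case (Cons a y)
  have "\<forall>k. Suc k < length y \<longrightarrow> y!k \<noteq> y!Suc k"
    using Cons.prems by (metis Suc_less_eq length_Cons nth_Cons_Suc)
  then have ih: "y = alt (hd y) (length y)" by (rule Cons.IH)
  show ?case
  proof (cases y)
    case Nil then show ?thesis by simp
  next
    case (Cons b z)
    then have "b = (\<not> a)" using Cons.prems[rule_format, of 0] by auto
    then show ?thesis using ih Cons by simp
  qed
qed

definition Sset :: "nat \<Rightarrow> bool list set" where
  "Sset L = range (\<lambda>b. alt b L) \<union> (\<lambda>(c,l). c # alt c l) ` (UNIV \<times> {..<L})"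

lemma Sset_finite: "finite (Sset L)" by (simp add: Sset_def)

lemma Sset_card: "card (Sset L) \<le> 2 + 2*L"
proof -
  have "card (Sset L) \<le> card (range (\<lambda>b. alt b L)) + card ((\<lambda>(c,l). c # alt c l) ` (UNIV \<times> {..<L}))"
    unfolding Sset_def by (rule card_Un_le)
  also have "\<dots> \<le> card (UNIV :: bool set) + card (UNIV \<times> {..<L} :: (bool \<times> nat) set)"
    by (intro add_mono card_image_le) auto
  also have "\<dots> = 2 + 2*L" by (simp add: card_cartesian_product)
  finally show ?thesis .
qed

lemma sig_range: "sig x \<in> Sset (length x)"
proof (cases "haspair x")
  case True
  note p = lastpair_prop[OF True]
  define k where "k = lastpair x"
  have np: "\<forall>i. Suc i < length (drop (Suc k) x) \<longrightarrow> drop (Suc k) x ! i \<noteq> drop (Suc k) x ! Suc i"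
  proof (intro allI impI notI)
    fix i assume i: "Suc i < length (drop (Suc k) x)" "drop (Suc k) x ! i = drop (Suc k) x ! Suc i"
    then have "Suc (Suc k + i) < length x" "x!(Suc k + i) = x!Suc (Suc k + i)" by auto
    then have "Suc k + i \<le> k" using lastpair_max k_def by blast
    then show False by simp
  qed
  have "drop (Suc k) x = alt (hd (drop (Suc k) x)) (length (drop (Suc k) x))"
    by (rule nopair_alt[OF np])
  moreover have "hd (drop (Suc k) x) = x!k" using p k_def by (simp add: hd_drop_conv_nth)
  moreover have "drop k x = x!k # drop (Suc k) x" by (rule Cons_nth_drop_Suc[symmetric]) (use p k_def in simp)
  ultimately have "drop k x = x!k # alt (x!k) (length x - Suc k)"
    by simp
  then have "sig x = x!k # alt (x!k) (length x - Suc k)" using True by (simp add: sig_def k_def)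
  then show ?thesis unfolding Sset_def using p k_def by auto
next
  case False
  then have "\<forall>k. Suc k < length x \<longrightarrow> x!k \<noteq> x!Suc k" by (auto simp: haspair_def)
  then have "x = alt (hd x) (length x)" by (rule nopair_alt)
  then show ?thesis using False unfolding Sset_def sig_def by (metis UnI1 rangeI)
qed



fun sendA :: "nat \<Rightarrow> ('x \<Rightarrow> nat) \<Rightarrow> (nat \<Rightarrow> ('x,'y,'z) protocol) \<Rightarrow> ('x,'y,'z) protocol" where
  "sendA 0 f cont = cont 0"
| "sendA (Suc k) f cont = ANode (\<lambda>x. 2^k \<le> f x) (sendA k f cont) (sendA k (\<lambda>x. f x - 2^k) (\<lambda>v. cont (v + 2^k)))"

fun sendB :: "nat \<Rightarrow> ('y \<Rightarrow> nat) \<Rightarrow> (nat \<Rightarrow> ('x,'y,'z) protocol) \<Rightarrow> ('x,'y,'z) protocol" where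
  "sendB 0 f cont = cont 0"
| "sendB (Suc k) f cont = BNode (\<lambda>y. 2^k \<le> f y) (sendB k f cont) (sendB k (\<lambda>y. f y - 2^k) (\<lambda>v. cont (v + 2^k)))"

lemma sendA_eval: "f x < 2^k \<Longrightarrow> prot_eval (sendA k f cont) x y = prot_eval (cont (f x)) x y"
  by (induction k arbitrary: f cont) auto

lemma sendB_eval: "f y < 2^k \<Longrightarrow> prot_eval (sendB k f cont) x y = prot_eval (cont (f y)) x y"
  by (induction k arbitrary: f cont) auto

lemma sendA_depth: "(\<forall>v. prot_depth (cont v) \<le> D) \<Longrightarrow> prot_depth (sendA k f cont) \<le> k + D"
  by (induction k arbitrary: f cont) (auto simp: max_def)

lemma sendB_depth: "(\<forall>v. prot_depth (cont v) \<le> D) \<Longrightarrow> prot_depth (sendB k f cont) \<le> k + D"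
  by (induction k arbitrary: f cont) (auto simp: max_def)

lemma cc_split_le:
  assumes "prot_depth P \<le> d" "\<forall>x y. length x = i \<longrightarrow> length y = m - i \<longrightarrow> prot_eval P x y = g (x@y)"
  shows "cc_split g m i \<le> d"
proof -
  have "cc_split g m i \<le> prot_depth P"
    unfolding cc_split_def by (rule Least_le) (use assms(2) in blast)
  then show ?thesis using assms(1) by simp
qed

lemma encode_finite:
  assumes "finite T" "card T \<le> 2^k"
  obtains e :: "'a \<Rightarrow> nat" where "inj_on e T" "\<forall>t\<in>T. e t < 2^k"
proof -
  obtain e n where e: "e ` T = {i::nat. i < n}" "inj_on e T"
    using finite_imp_inj_to_nat_seg[OF assms(1)] by blast
  have "card (e ` T) = card T" using e(2) by (simp add: card_image)
  then have "n = card T" using e(1) by simp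
  have "\<forall>t\<in>T. e t < 2^k"
  proof
    fix t assume "t \<in> T"
    then have "e t \<in> e ` T" by simp
    then have "e t < n" using e(1) by simp
    then show "e t < 2^k" using \<open>n = card T\<close> assms(2) by simp
  qed
  then show ?thesis using e(2) that by blast
qed

lemma GA:
  fixes g :: "bool list \<Rightarrow> bool" and \<tau> :: "bool list \<Rightarrow> 'a"
  assumes inv: "\<And>x x' y. length x = s \<Longrightarrow> length x' = s \<Longrightarrow> length y = m - s \<Longrightarrow> \<tau> x = \<tau> x' \<Longrightarrow> g (x@y) = g (x'@y)"
    and rng: "\<And>x. length x = s \<Longrightarrow> \<tau> x \<in> T" and fin: "finite T" and cd: "card T \<le> 2^k"
  shows "cc_split g m s \<le> k + 1"
proof -
  obtain e :: "'a \<Rightarrow> nat" where e: "inj_on e T" "\<forall>t\<in>T. e t < 2^k" using encode_finite[OF fin cd] by blast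
  define rep where "rep i = (SOME x. length x = s \<and> e (\<tau> x) = i)" for i
  define P :: "(bool list, bool list, bool) protocol" where
    "P = sendA k (\<lambda>x. e (\<tau> x)) (\<lambda>i. BNode (\<lambda>y. g (rep i @ y)) (Leaf False) (Leaf True))"
  have "prot_depth P \<le> k + 1" unfolding P_def by (rule sendA_depth) simp
  moreover have "\<forall>x y. length x = s \<longrightarrow> length y = m - s \<longrightarrow> prot_eval P x y = g (x@y)"
  proof (intro allI impI)
    fix x y :: "bool list" assume x: "length x = s" and y: "length y = m - s"
    have lt: "e (\<tau> x) < 2^k" using e rng[OF x] by blast
    have r: "length (rep (e (\<tau> x))) = s \<and> e (\<tau> (rep (e (\<tau> x)))) = e (\<tau> x)"
      unfolding rep_def by (rule someI[of _ x]) (simp add: x)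
    then have "\<tau> (rep (e (\<tau> x))) = \<tau> x" using inj_onD[OF e(1) conjunct2[OF r] rng[OF conjunct1[OF r]] rng[OF x]] by simp
    then have "g (rep (e (\<tau> x)) @ y) = g (x @ y)" using inv r x y by blast
    then show "prot_eval P x y = g (x@y)" unfolding P_def using lt by (simp add: sendA_eval)
  qed
  ultimately show ?thesis by (rule cc_split_le)
qed

lemma GB:
  fixes g :: "bool list \<Rightarrow> bool" and \<tau> :: "bool list \<Rightarrow> 'a"
  assumes inv: "\<And>x y y'. length x = s \<Longrightarrow> length y = m - s \<Longrightarrow> length y' = m - s \<Longrightarrow> \<tau> y = \<tau> y' \<Longrightarrow> g (x@y) = g (x@y')"
    and rng: "\<And>y. length y = m - s \<Longrightarrow> \<tau> y \<in> T" and fin: "finite T" and cd: "card T \<le> 2^k"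
  shows "cc_split g m s \<le> k + 1"
proof -
  obtain e :: "'a \<Rightarrow> nat" where e: "inj_on e T" "\<forall>t\<in>T. e t < 2^k" using encode_finite[OF fin cd] by blast
  define rep where "rep i = (SOME y. length y = m - s \<and> e (\<tau> y) = i)" for i
  define P :: "(bool list, bool list, bool) protocol" where
    "P = sendB k (\<lambda>y. e (\<tau> y)) (\<lambda>i. ANode (\<lambda>x. g (x @ rep i)) (Leaf False) (Leaf True))"
  have "prot_depth P \<le> k + 1" unfolding P_def by (rule sendB_depth) simp
  moreover have "\<forall>x y. length x = s \<longrightarrow> length y = m - s \<longrightarrow> prot_eval P x y = g (x@y)"
  proof (intro allI impI)
    fix x y :: "bool list" assume x: "length x = s" and y: "length y = m - s"
    have lt: "e (\<tau> y) < 2^k" using e rng[OF y] by blast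
    have r: "length (rep (e (\<tau> y))) = m - s \<and> e (\<tau> (rep (e (\<tau> y)))) = e (\<tau> y)"
      unfolding rep_def by (rule someI[of _ y]) (simp add: y)
    then have "\<tau> (rep (e (\<tau> y))) = \<tau> y" using inj_onD[OF e(1) conjunct2[OF r] rng[OF conjunct1[OF r]] rng[OF y]] by simp
    then have "g (x @ rep (e (\<tau> y))) = g (x @ y)" using inv r x y by blast
    then show "prot_eval P x y = g (x@y)" unfolding P_def using lt by (simp add: sendB_eval)
  qed
  ultimately show ?thesis by (rule cc_split_le)
qed



definition Mf :: "nat \<Rightarrow> bool list \<Rightarrow> bool list" where
  "Mf N x = (if N = 50 then phi 0 (eca_word 50 x) else if N = 178 \<or> N = 77 then phi 0 x else x)"
definition LM :: "nat \<Rightarrow> nat \<Rightarrow> nat" where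
  "LM N s = (if N = 50 then s - 2 else s)"
definition tau :: "nat \<Rightarrow> bool list \<Rightarrow> bool list \<times> bool list" where
  "tau N x = (sig (Mf N x), drop (length x - 2) x)"

lemma len_Mf: "length (Mf N x) = LM N (length x)"
  by (simp add: Mf_def LM_def)

definition D2 :: "bool list set" where
  "D2 = {[],[False],[True],[False,False],[False,True],[True,False],[True,True]}"

lemma D2_mem: "length z \<le> 2 \<Longrightarrow> z \<in> D2"
proof -
  assume l: "length z \<le> 2"
  consider "z = []" | a where "z = [a]" | a b where "z = [a,b]"
  proof (cases z)
    case Nil then show ?thesis using that by simp
  next
    case (Cons a z')
    show ?thesis
    proof (cases z')
      case Nil then show ?thesis using that Cons by simp
    next
      case (Cons b z'')
      then have "z'' = []" using l \<open>z = a # z'\<close> by simp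
      then show ?thesis using that Cons \<open>z = a # z'\<close> by simp
    qed
  qed
  then show ?thesis unfolding D2_def by (cases; auto)
qed

lemma D2_card: "card D2 \<le> 7" unfolding D2_def by (rule order_trans[OF card_insert_le_m1]) (auto intro!: card_insert_le_m1 order_trans[OF card_insert_le_m1])

lemma tau_range: "tau N x \<in> Sset (LM N (length x)) \<times> D2"
  using sig_range[of "Mf N x"] D2_mem[of "drop (length x - 2) x"] by (simp add: tau_def len_Mf)

lemma T_card: "card (Sset L \<times> D2) \<le> (2 + 2*L) * 7"
proof -
  have "card (Sset L \<times> D2) = card (Sset L) * card D2" by (rule card_cartesian_product)
  also have "\<dots> \<le> (2 + 2*L) * 7" by (rule mult_mono) (use Sset_card D2_card in auto)
  finally show ?thesis .
qed

lemma T_finite: "finite (Sset L \<times> D2)" by (simp add: Sset_finite D2_def)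

lemma inv_all:
  assumes N: "N \<in> {23, 50, 77, 178, 232}" and x: "length x = s" and x': "length x' = s"
    and y: "length y = 2*n+1-s" and s: "s \<le> n+1" and t: "tau N x = tau N x'"
  shows "eca_pred N n (x@y) = eca_pred N n (x'@y)"
proof -
  have sg: "sig (Mf N x) = sig (Mf N x')" and dr: "drop (s-2) x = drop (s-2) x'"
    using t x x' by (auto simp: tau_def)
  have lw: "length (x@y) = 2*n+1" "length (x'@y) = 2*n+1" using x x' y s by auto
  have ph: "phi 0 (x@y) = phi 0 x @ phi s y" "phi 0 (x'@y) = phi 0 x' @ phi s y"
    using x x' by (simp_all add: phi_append)
  have xs: "length x \<le> n + 2" using x s by simp
  from N consider "N = 23" | "N = 50" | "N = 77" | "N = 178" | "N = 232" by auto
  then show ?thesis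
  proof cases
    case 1
    have "Q n (x@y) = Q n (x'@y)" using sig_inv[of x x' n y] sg x x' xs by (simp add: Mf_def 1)
    then show ?thesis using pred23[OF lw(1)] pred23[OF lw(2)] 1 by simp
  next
    case 5
    have "Q n (x@y) = Q n (x'@y)" using sig_inv[of x x' n y] sg x x' xs by (simp add: Mf_def 5)
    then show ?thesis using pred232[OF lw(1)] pred232[OF lw(2)] 5 by simp
  next
    case 4
    have "Q n (phi 0 x @ phi s y) = Q n (phi 0 x' @ phi s y)"
      using sig_inv[of "phi 0 x" "phi 0 x'" n "phi s y"] sg x x' xs by (simp add: Mf_def 4)
    then show ?thesis using pred178[OF lw(1)] pred178[OF lw(2)] 4 ph by simp
  next
    case 3
    have "Q n (phi 0 x @ phi s y) = Q n (phi 0 x' @ phi s y)"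
      using sig_inv[of "phi 0 x" "phi 0 x'" n "phi s y"] sg x x' xs by (simp add: Mf_def 3)
    then show ?thesis using pred77[OF lw(1)] pred77[OF lw(2)] 3 ph by simp
  next
    case 2
    show ?thesis
    proof (cases "s < 2")
      case True
      then have "x = x'" using dr by simp
      then show ?thesis by simp
    next
      case False
      then obtain n' where n: "n = Suc n'" using s by (cases n) auto
      have lw': "length (x@y) = 2*Suc n'+1" "length (x'@y) = 2*Suc n'+1" using lw n by auto
      have w1: "eca_word 50 (x@y) = eca_word 50 x @ eca_word 50 (drop (s-2) x @ y)"
        using word_split[of x 50 y] False x by simp
      have w2: "eca_word 50 (x'@y) = eca_word 50 x' @ eca_word 50 (drop (s-2) x @ y)"
        using word_split[of x' 50 y] False x' dr by simp
      have lm: "length (eca_word 50 x) = s - 2" "length (eca_word 50 x') = s - 2" using x x' by auto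
      have "Q n' (phi 0 (eca_word 50 x) @ phi (s-2) (eca_word 50 (drop (s-2) x @ y)))
          = Q n' (phi 0 (eca_word 50 x') @ phi (s-2) (eca_word 50 (drop (s-2) x @ y)))"
        using sig_inv[of "phi 0 (eca_word 50 x)" "phi 0 (eca_word 50 x')" n'] sg lm s n
        by (simp add: Mf_def 2)
      then show ?thesis using pred50[OF lw'(1)] pred50[OF lw'(2)] 2 n w1 w2 lm
        by (simp add: phi_append)
    qed
  qed
qed

lemma sym_local: "N \<in> {23, 50, 77, 178, 232} \<Longrightarrow> eca_local N a b c = eca_local N c b a"
  by (auto simp: loc23 loc50 loc77 loc178 loc232 maj_def)

lemma word_rev:
  assumes sym: "\<And>a b c. eca_local N a b c = eca_local N c b a"
  shows "eca_word N (rev w) = rev (eca_word N w)"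
proof (rule nth_equalityI)
  show "length (eca_word N (rev w)) = length (rev (eca_word N w))" by simp
  fix j assume j: "j < length (eca_word N (rev w))"
  then have jl: "j + 2 < length w" by simp
  have "eca_word N (rev w) ! j = eca_local N (rev w ! j) (rev w ! (j+1)) (rev w ! (j+2))"
    using j by (simp add: nth_word)
  also have "\<dots> = eca_local N (w ! (length w - 1 - j)) (w ! (length w - 2 - j)) (w ! (length w - 3 - j))"
    using jl by (simp add: rev_nth numeral_eq_Suc)
  also have "\<dots> = eca_local N (w ! (length w - 3 - j)) (w ! (length w - 3 - j + 1)) (w ! (length w - 3 - j + 2))"
  proof -
    have "length w - 3 - j + 1 = length w - 2 - j" "length w - 3 - j + 2 = length w - 1 - j" using jl by auto
    then show ?thesis using sym by simp
  qed
  also have "\<dots> = eca_word N w ! (length w - 3 - j)" using jl by (simp add: nth_word)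
  also have "\<dots> = rev (eca_word N w) ! j" using jl by (simp add: rev_nth numeral_eq_Suc)
  finally show "eca_word N (rev w) ! j = rev (eca_word N w) ! j" .
qed

lemma pow_rev:
  assumes "\<And>a b c. eca_local N a b c = eca_local N c b a"
  shows "(eca_word N ^^ n) (rev w) = rev ((eca_word N ^^ n) w)"
  by (induction n) (auto simp: word_rev[OF assms])

lemma pred_rev:
  assumes N: "N \<in> {23, 50, 77, 178, 232}" and l: "length w = 2*n+1"
  shows "eca_pred N n (rev w) = eca_pred N n w"
proof -
  have "length ((eca_word N ^^ n) w) = Suc 0" using l by simp
  then obtain a where "(eca_word N ^^ n) w = [a]" by (metis length_0_conv length_Suc_conv)
  then show ?thesis unfolding eca_pred_def pow_rev[OF sym_local[OF N]] by simp
qed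

definition K :: "nat \<Rightarrow> nat" where "K n = Suc (floor_log (14*n+28))"

lemma K_card: "L \<le> n + 1 \<Longrightarrow> card (Sset L \<times> D2) \<le> 2 ^ K n"
proof -
  assume L: "L \<le> n + 1"
  have "card (Sset L \<times> D2) \<le> (2 + 2*L) * 7" by (rule T_card)
  also have "\<dots> \<le> 14*n+28" using L by simp
  also have "\<dots> < 2 * 2 ^ floor_log (14*n+28)" by (rule floor_log_exp2_gt)
  finally show ?thesis by (simp add: K_def)
qed

lemma split_bound:
  assumes N: "N \<in> {23, 50, 77, 178, 232}" and s: "s < 2*n+1"
  shows "cc_split (eca_pred N n) (2*n+1) s \<le> K n + 1"
proof (cases "s \<le> n+1")
  case True
  show ?thesis
  proof (rule GA[where \<tau>="tau N" and T="Sset (LM N s) \<times> D2"])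
    show "eca_pred N n (x@y) = eca_pred N n (x'@y)"
      if "length x = s" "length x' = s" "length y = 2*n+1 - s" "tau N x = tau N x'" for x x' y
      using inv_all[OF N that(1,2) _ True that(4)] that(3) by simp
    show "tau N x \<in> Sset (LM N s) \<times> D2" if "length x = s" for x
      using tau_range[of N x] that by simp
    show "finite (Sset (LM N s) \<times> D2)" by (rule T_finite)
    show "card (Sset (LM N s) \<times> D2) \<le> 2 ^ K n" by (rule K_card) (use True in \<open>auto simp: LM_def\<close>)
  qed
next
  case False
  define s' where "s' = 2*n+1-s"
  have s': "s' \<le> n+1" using False s s'_def by simp
  show ?thesis
  proof (rule GB[where \<tau>="\<lambda>y. tau N (rev y)" and T="Sset (LM N s') \<times> D2"])
    show "eca_pred N n (x@y) = eca_pred N n (x@y')"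
      if "length x = s" "length y = 2*n+1 - s" "length y' = 2*n+1 - s" "tau N (rev y) = tau N (rev y')" for x y y'
    proof -
      have "eca_pred N n (x@y) = eca_pred N n (rev y @ rev x)"
        using pred_rev[OF N, of "x@y"] that s by simp
      also have "\<dots> = eca_pred N n (rev y' @ rev x)"
        by (rule inv_all[OF N _ _ _ s' that(4)]) (use that s s'_def in auto)
      also have "\<dots> = eca_pred N n (x@y')"
        using pred_rev[OF N, of "x@y'"] that s by simp
      finally show ?thesis .
    qed
    show "tau N (rev y) \<in> Sset (LM N s') \<times> D2" if "length y = 2*n+1 - s" for y
      using tau_range[of N "rev y"] that s'_def by simp
    show "finite (Sset (LM N s') \<times> D2)" by (rule T_finite)
    show "card (Sset (LM N s') \<times> D2) \<le> 2 ^ K n" by (rule K_card) (use s' in \<open>auto simp: LM_def\<close>)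
  qed
qed

lemma cc_bound:
  assumes N: "N \<in> {23, 50, 77, 178, 232}"
  shows "cc (eca_pred N n) (2*n+1) \<le> K n + 1"
  unfolding cc_def using split_bound[OF N] by (subst Max_le_iff) auto

lemma ln2_half: "1/2 \<le> ln (2::real)"
proof -
  have "exp 1 \<le> (4::real)" using exp_le by simp
  then have "ln (exp 1) \<le> ln (4::real)" by (subst ln_le_cancel_iff) auto
  also have "ln (4::real) = 2 * ln 2" using ln_realpow[of 2 2] by simp
  finally show ?thesis by simp
qed

lemma K_le: "n \<ge> 4 \<Longrightarrow> real (K n + 1) \<le> 10 * ln (real n)"
proof -
  assume n: "n \<ge> 4"
  define f where "f = floor_log (14*n+28)"
  have "2 ^ f \<le> 14*n+28" unfolding f_def by (rule floor_log_exp2_le) simp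
  also have "14*n+28 \<le> n^4"
  proof -
    have "42 \<le> n^3" using power_mono[of 4 n 3] n by simp
    then have "42 * n \<le> n^3 * n" by simp
    then show ?thesis using n by (simp add: power_Suc2[symmetric] del: power_Suc)
  qed
  finally have p: "(2::real) ^ f \<le> real n ^ 4" by (metis of_nat_le_iff of_nat_numeral of_nat_power)
  have "ln ((2::real) ^ f) \<le> ln (real n ^ 4)" using p n by (subst ln_le_cancel_iff) auto
  then have "real f * ln 2 \<le> 4 * ln (real n)" using n by (simp add: ln_realpow)
  moreover have "real f * (1/2) \<le> real f * ln 2" using ln2_half by (intro mult_left_mono) auto
  ultimately have f4: "real f \<le> 8 * ln (real n)" by simp
  have "ln (exp 1) \<le> ln (real n)" using exp_le n by (subst ln_le_cancel_iff) auto
  then have "1 \<le> ln (real n)" by simp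
  then show ?thesis using f4 by (simp add: K_def f_def)
qed


theorem mainTheorem14:
  fixes N :: nat
  assumes "N \<in> {23, 50, 77, 178, 232}"
  shows "(\<lambda>n. real (cc (eca_pred N n) (2 * n + 1))) \<in> O(\<lambda>n. ln (real n))"
proof (rule bigoI[where c=10])
  show "\<forall>\<^sub>F n in at_top. norm (real (cc (eca_pred N n) (2 * n + 1))) \<le> 10 * norm (ln (real n))"
    using eventually_ge_at_top[of "4::nat"]
  proof eventually_elim
    case (elim n)
    have "real (cc (eca_pred N n) (2 * n + 1)) \<le> real (K n + 1)"
      using cc_bound[OF assms, of n] by linarith
    also have "\<dots> \<le> 10 * ln (real n)" by (rule K_le[OF elim])
    finally show ?case using elim by simp
  qed
qed
end
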